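(* Let $I$ and $J$ be disjoint subsets of $\mathbb N$, $v$ a value, $p_i\in[0,1]$ ($i\in I$), $q_j\in[0,1]$ ($j\in J$), and let $M$ be a well-formed network with $M\equiv N\mid\prod_{i\in I}m_i[\mathsf{snd}\langle v\rangle_{p_i}]^{\nu_{m_i}}\mid\prod_{j\in J}n_j[\mathsf{fwd}_{q_j}]^{\nu_{n_j}}$ such that for all $i\in I$: (1) $\{n_j: j\in J\}\subseteq\nu_{m_i}\subseteq\mathrm{nds}(M)$; (2) every node $k[P]^\mu$ of $N$ with $k\in\nu_{m_i}$ satisfies $\neg\mathrm{rcv}(P)$. Let $O=N\mid\prod_{i\in I}m_i[\mathsf{nil}]^{\nu_{m_i}}\mid\prod_{j\in J}n_j[\mathsf{resnd}\langle v\rangle_{q_j}]^{\nu_{n_j}}$ and, for any partition $I_1\cup I_2\cup I_3$ of $I$, $O_{I_1,I_2,I_3}=N\mid\prod_{i\in I_1}m_i[{!}\langle v\rangle]^{\nu_{m_i}}\mid\prod_{i\in I_2}m_i[\mathsf{nil}]^{\nu_{m_i}}\mid\prod_{i\in I_3}m_i[\mathsf{snd}\langle v\rangle_{p_i}]^{\nu_{m_i}}\mid\prod_{j\in J}n_j[\mathsf{resnd}\langle v\rangle_{q_j}]^{\nu_{n_j}}$. Then $O_{I_1,I_2,I_3}\overset{\hat\tau}{\Longrightarrow}\overline O$.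
   Context: The process calculus pTCWS. Processes $P,Q$ and probabilistic choices $C,D$ are $P ::= \mathsf{nil} \mid {!}\langle u\rangle.C \mid \lfloor ?(x).C\rfloor D \mid \tau.C \mid \sigma.C \mid X \mid \mathsf{fix}\,X.P$ and $C ::= \bigoplus_{i\in I} p_i{:}P_i$ ($I$ finite non-empty, $p_i\in(0,1]$, $\sum_i p_i=1$); in $\mathsf{fix}\,X.P$ every occurrence of $X$ is time-guarded (under a $\sigma$-prefix or in a timeout branch $D$). $1{:}P$ is written $P$; $P\oplus_pQ$ is $p{:}P\oplus(1-p){:}Q$; ${!}\langle v\rangle$ is ${!}\langle v\rangle.\mathsf{nil}$; $?(x).C$ abbreviates $\mathsf{fix}\,X.\lfloor ?(x).C\rfloor X$ ($X$ not free in $C$). Networks: $M::=\mathbf 0\mid M_1\mid M_2\mid n[P]^\nu\mid\bot$, where $n[P]^\nu$ is a node named $n$ running closed process $P$ with neighbour set $\nu$, and $\bot$ is a stuck network; $\prod$ is iterated $\mid$; $\mathrm{nds}(M)$ is the set of node names. Structural congruence $\equiv$: least equivalence preserved by $\mid$, making $\mid$ a commutative monoid with unit $\mathbf 0$, with $n[\mathsf{fix}\,X.P]^\nu\equiv n[P\{\mathsf{fix}\,X.P/X\}]^\nu$. Well-formed: no node is its own neighbour, distinct names, symmetric neighbourhood, connected neighbour graph; all networks are well-formed. $\mathrm{rcv}(P)$ holds iff $n[P]^\nu\equiv n[\lfloor ?(x).C\rfloor D]^\nu$ for some $x,C,D$. Semantics: finite-support probability distributions on networks, $\overline M$ Dirac;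 $[\![n[\bigoplus_i p_i{:}P_i]^\nu]\!]=\sum_ip_i\overline{n[P_i]^\nu}$; $(\Delta\mid\Theta)(M_1\mid M_2)=\Delta(M_1)\Theta(M_2)$. Transitions $M\xrightarrow{\lambda}\Delta$, $\lambda\in\{m!v\triangleright\nu, m?v,\tau,\sigma\}$, form the least relation closed under: (Snd) $m[{!}\langle v\rangle.C]^\nu\xrightarrow{m!v\triangleright\nu}[\![m[C]^\nu]\!]$; (Rcv) if $m\in\nu$: $n[\lfloor ?(x).C\rfloor D]^\nu\xrightarrow{m?v}[\![n[C\{v/x\}]^\nu]\!]$; $\mathbf 0\xrightarrow{m?v}\overline{\mathbf 0}$; (RcvEnb) if $\neg(m\in\nu\wedge\mathrm{rcv}(P))$ and $m\ne n$: $n[P]^\nu\xrightarrow{m?v}\overline{n[P]^\nu}$; (RcvPar) $M\xrightarrow{m?v}\Delta$, $N\xrightarrow{m?v}\Theta$ give $M\mid N\xrightarrow{m?v}\Delta\mid\Theta$; (Bcast) $M\xrightarrow{m!v\triangleright\nu}\Delta$, $N\xrightarrow{m?v}\Theta$ give $M\mid N\xrightarrow{m!v\triangleright(\nu\setminus\mathrm{nds}(N))}\Delta\mid\Theta$ (and symmetrically); (Tau) $m[\tau.C]^\nu\xrightarrow{\tau}[\![m[C]^\nu]\!]$; (TauPar) $M\xrightarrow{\tau}\Delta$ and $N$ not of the form $\bot\mid N'$ give $M\mid N\xrightarrow{\tau}\Delta\mid\overline N$ (and symmetrically); $\mathbf 0\xrightarrow{\sigma}\overline{\mathbf 0}$;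 $n[\mathsf{nil}]^\nu\xrightarrow{\sigma}\overline{n[\mathsf{nil}]^\nu}$; (Timeout) $n[\lfloor ?(x).C\rfloor D]^\nu\xrightarrow{\sigma}[\![n[D]^\nu]\!]$; (Sleep) $n[\sigma.C]^\nu\xrightarrow{\sigma}[\![n[C]^\nu]\!]$; ($\sigma$-Par) $M\xrightarrow{\sigma}\Delta$, $N\xrightarrow{\sigma}\Theta$ give $M\mid N\xrightarrow{\sigma}\Delta\mid\Theta$; (Rec) $n[P\{\mathsf{fix}\,X.P/X\}]^\nu\xrightarrow{\lambda}\Delta$ gives $n[\mathsf{fix}\,X.P]^\nu\xrightarrow{\lambda}\Delta$; (ShhSnd) $M\xrightarrow{m!v\triangleright\emptyset}\Delta$ gives $M\xrightarrow{\tau}\Delta$. $\bot$ has no transitions. Weak transitions: $M\xrightarrow{\hat\tau}\Delta$ iff $M\xrightarrow{\tau}\Delta$ or $\Delta=\overline M$; for a sub-distribution $\Delta=\sum_{i\in I}p_i\overline{M_i}$, $\Delta\xrightarrow{\hat\tau}\Theta$ iff $M_i\xrightarrow{\hat\tau}\Theta_i$ for all $i$ and $\Theta=\sum_ip_i\Theta_i$; $\overset{\hat\tau}{\Longrightarrow}$ is the reflexive-transitive closure of $\xrightarrow{\hat\tau}$ (starting from $\overline M$). Gossip processes: $\mathsf{snd}\langle u\rangle_p=\tau.({!}\langle u\rangle\oplus_p\mathsf{nil})$, $\mathsf{resnd}\langle u\rangle_p=\sigma.\mathsf{snd}\langle u\rangle_p$, $\mathsf{fwd}_p=?(x).\mathsf{resnd}\langle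 x\rangle_p$. *)

theory Defs
  imports Complex_Main
begin

datatype 'v dterm = DVal 'v | DVar nat

text \<open>A probabilistic choice C = (+)_i p_i:P_i is represented as a
list of weighted processes.  PRcv x C D is the receiver with timeout
(floor ?(x).C floor) D; PVar / PFix are process variables and recursion.\<close>
datatype 'v proc =
    PNil
  | PSnd "'v dterm" "(real \<times> 'v proc) list"
  | PRcv nat "(real \<times> 'v proc) list" "(real \<times> 'v proc) list"
  | PTau "(real \<times> 'v proc) list"
  | PSig "(real \<times> 'v proc) list"
  | PVar nat
  | PFix nat "'v proc"

type_synonym 'v choice = "(real \<times> 'v proc) list"

datatype ('n, 'v) net =
    Zero
  | Par "('n, 'v) net" "('n, 'v) net"
  | Node 'n "'v proc" "'n set"
  | Bot

text \<open>Substitution of a value for a data variable (values are closed, so no capture).\<close>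
primrec dsub :: "'v \<Rightarrow> nat \<Rightarrow> 'v proc \<Rightarrow> 'v proc" where
  "dsub v x PNil = PNil"
| "dsub v x (PSnd u C) =
     PSnd (if u = DVar x then DVal v else u) (map (map_prod id (dsub v x)) C)"
| "dsub v x (PRcv y C D) =
     PRcv y (if y = x then C else map (map_prod id (dsub v x)) C) (map (map_prod id (dsub v x)) D)"
| "dsub v x (PTau C) = PTau (map (map_prod id (dsub v x)) C)"
| "dsub v x (PSig C) = PSig (map (map_prod id (dsub v x)) C)"
| "dsub v x (PVar X) = PVar X"
| "dsub v x (PFix X P) = PFix X (dsub v x P)"

definition csub :: "'v \<Rightarrow> nat \<Rightarrow> 'v choice \<Rightarrow> 'v choice" where
  "csub v x C = map (map_prod id (dsub v x)) C"

primrec psub :: "'v proc \<Rightarrow> nat \<Rightarrow> 'v proc \<Rightarrow> 'v proc" where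
  "psub R X PNil = PNil"
| "psub R X (PSnd u C) = PSnd u (map (map_prod id (psub R X)) C)"
| "psub R X (PRcv y C D) = PRcv y (map (map_prod id (psub R X)) C) (map (map_prod id (psub R X)) D)"
| "psub R X (PTau C) = PTau (map (map_prod id (psub R X)) C)"
| "psub R X (PSig C) = PSig (map (map_prod id (psub R X)) C)"
| "psub R X (PVar Y) = (if Y = X then R else PVar Y)"
| "psub R X (PFix Y P) = (if Y = X then PFix Y P else PFix Y (psub R X P))"

definition unfold :: "nat \<Rightarrow> 'v proc \<Rightarrow> 'v proc" where
  "unfold X P = psub (PFix X P) X P"

primrec nlist :: "('n, 'v) net \<Rightarrow> 'n list" where
  "nlist Zero = []"
| "nlist (Par M N) = nlist M @ nlist N"
| "nlist (Node n P \<nu>) = [n]"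
| "nlist Bot = []"

definition nds :: "('n, 'v) net \<Rightarrow> 'n set" where
  "nds M = set (nlist M)"

primrec nodes :: "('n, 'v) net \<Rightarrow> ('n \<times> 'v proc \<times> 'n set) set" where
  "nodes Zero = {}"
| "nodes (Par M N) = nodes M \<union> nodes N"
| "nodes (Node n P \<nu>) = {(n, P, \<nu>)}"
| "nodes Bot = {}"

primrec has_bot :: "('n, 'v) net \<Rightarrow> bool" where
  "has_bot Zero = False"
| "has_bot (Par M N) = (has_bot M \<or> has_bot N)"
| "has_bot (Node n P \<nu>) = False"
| "has_bot Bot = True"

inductive cong :: "('n, 'v) net \<Rightarrow> ('n, 'v) net \<Rightarrow> bool" where
  cong_refl: "cong M M"
| cong_sym: "cong M N \<Longrightarrow> cong N M"
| cong_trans: "cong M N \<Longrightarrow> cong N K \<Longrightarrow> cong M K"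
| cong_parL: "cong M M' \<Longrightarrow> cong (Par M N) (Par M' N)"
| cong_parR: "cong N N' \<Longrightarrow> cong (Par M N) (Par M N')"
| cong_comm: "cong (Par M N) (Par N M)"
| cong_assoc: "cong (Par (Par M N) K) (Par M (Par N K))"
| cong_unit: "cong (Par M Zero) M"
| cong_fix: "cong (Node n (PFix X P) \<nu>) (Node n (unfold X P) \<nu>)"

definition rcv :: "'n \<Rightarrow> 'n set \<Rightarrow> 'v proc \<Rightarrow> bool" where
  "rcv n \<nu> P \<longleftrightarrow> (\<exists>x C D. cong (Node n P \<nu>) (Node n (PRcv x C D) \<nu>))"

definition nbr_rel :: "('n, 'v) net \<Rightarrow> ('n \<times> 'n) set" where
  "nbr_rel M = {(a, b). \<exists>P \<nu>. (a, P, \<nu>) \<in> nodes M \<and> b \<in> \<nu> \<and> b \<in> nds M}"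

definition well_formed :: "('n, 'v) net \<Rightarrow> bool" where
  "well_formed M \<longleftrightarrow>
     (\<forall>(n, P, \<nu>) \<in> nodes M. n \<notin> \<nu>)
   \<and> distinct (nlist M)
   \<and> (\<forall>(a, P, \<nu>) \<in> nodes M. \<forall>(b, Q, \<mu>) \<in> nodes M. b \<in> \<nu> \<longleftrightarrow> a \<in> \<mu>)
   \<and> (\<forall>a \<in> nds M. \<forall>b \<in> nds M. (a, b) \<in> (nbr_rel M)\<^sup>*)"

type_synonym ('n, 'v) dist = "('n, 'v) net \<Rightarrow> real"

definition dirac :: "('n, 'v) net \<Rightarrow> ('n, 'v) dist" where
  "dirac M = (\<lambda>N. if N = M then 1 else 0)"

definition lift :: "'n \<Rightarrow> 'v choice \<Rightarrow> 'n set \<Rightarrow> ('n, 'v) dist" where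
  "lift n C \<nu> = (\<lambda>N. sum_list (map (\<lambda>(p, P). if N = Node n P \<nu> then p else 0) C))"

definition dpar :: "('n, 'v) dist \<Rightarrow> ('n, 'v) dist \<Rightarrow> ('n, 'v) dist" where
  "dpar D E = (\<lambda>K. case K of Par A B \<Rightarrow> D A * E B | _ \<Rightarrow> 0)"

datatype ('n, 'v) lab = Out 'n 'v "'n set" | In 'n 'v | Tau | Sig

inductive trans :: "('n, 'v) net \<Rightarrow> ('n, 'v) lab \<Rightarrow> ('n, 'v) dist \<Rightarrow> bool" where
  Snd: "trans (Node m (PSnd (DVal v) C) \<nu>) (Out m v \<nu>) (lift m C \<nu>)"
| Rcv: "m \<in> \<nu> \<Longrightarrow> trans (Node n (PRcv x C D) \<nu>) (In m v) (lift n (csub v x C) \<nu>)"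
| RcvZero: "trans Zero (In m v) (dirac Zero)"
| RcvEnb: "\<not> (m \<in> \<nu> \<and> rcv n \<nu> P) \<Longrightarrow> m \<noteq> n \<Longrightarrow> trans (Node n P \<nu>) (In m v) (dirac (Node n P \<nu>))"
| RcvPar: "trans M (In m v) D \<Longrightarrow> trans N (In m v) E \<Longrightarrow> trans (Par M N) (In m v) (dpar D E)"
| BcastL: "trans M (Out m v \<nu>) D \<Longrightarrow> trans N (In m v) E \<Longrightarrow>
           trans (Par M N) (Out m v (\<nu> - nds N)) (dpar D E)"
| BcastR: "trans M (Out m v \<nu>) D \<Longrightarrow> trans N (In m v) E \<Longrightarrow>
           trans (Par N M) (Out m v (\<nu> - nds N)) (dpar E D)"
| TauNode: "trans (Node m (PTau C) \<nu>) Tau (lift m C \<nu>)"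
| TauParL: "trans M Tau D \<Longrightarrow> \<not> (\<exists>N'. cong N (Par Bot N')) \<Longrightarrow>
            trans (Par M N) Tau (dpar D (dirac N))"
| TauParR: "trans M Tau D \<Longrightarrow> \<not> (\<exists>N'. cong N (Par Bot N')) \<Longrightarrow>
            trans (Par N M) Tau (dpar (dirac N) D)"
| SigZero: "trans Zero Sig (dirac Zero)"
| SigNil: "trans (Node n PNil \<nu>) Sig (dirac (Node n PNil \<nu>))"
| Timeout: "trans (Node n (PRcv x C D) \<nu>) Sig (lift n D \<nu>)"
| Sleep: "trans (Node n (PSig C) \<nu>) Sig (lift n C \<nu>)"
| SigPar: "trans M Sig D \<Longrightarrow> trans N Sig E \<Longrightarrow> trans (Par M N) Sig (dpar D E)"
| Rec: "trans (Node n (unfold X P) \<nu>) l D \<Longrightarrow> trans (Node n (PFix X P) \<nu>) l D"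
| ShhSnd: "trans M (Out m v {}) D \<Longrightarrow> trans M Tau D"

definition hat_tau :: "('n, 'v) net \<Rightarrow> ('n, 'v) dist \<Rightarrow> bool" where
  "hat_tau M D \<longleftrightarrow> trans M Tau D \<or> D = dirac M"

text \<open>Lifting to (sub-)distributions D = sum_i p_i Dirac(M_i): a finite
decomposition (list) with nonnegative weights.\<close>
definition dist_hat_tau :: "('n, 'v) dist \<Rightarrow> ('n, 'v) dist \<Rightarrow> bool" where
  "dist_hat_tau D E \<longleftrightarrow>
     (\<exists>xs :: (real \<times> ('n, 'v) net \<times> ('n, 'v) dist) list.
        D = (\<lambda>N. sum_list (map (\<lambda>(p, M, _). if M = N then p else 0) xs))
      \<and> (\<forall>(p, M, F) \<in> set xs. 0 \<le> p \<and> hat_tau M F)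
      \<and> E = (\<lambda>N. sum_list (map (\<lambda>(p, _, F). p * F N) xs)))"

definition weak_tau :: "('n, 'v) net \<Rightarrow> ('n, 'v) dist \<Rightarrow> bool" where
  "weak_tau M E \<longleftrightarrow> dist_hat_tau\<^sup>*\<^sup>* (dirac M) E"

text \<open>A distribution equals Dirac(M) up to structural congruence: it is a
finitely supported probability distribution all of whose support is
structurally congruent to M.\<close>
definition dirac_cong :: "('n, 'v) dist \<Rightarrow> ('n, 'v) net \<Rightarrow> bool" where
  "dirac_cong E M \<longleftrightarrow>
     finite {N. E N \<noteq> 0} \<and> (\<forall>N. 0 \<le> E N) \<and> (\<forall>N. E N \<noteq> 0 \<longrightarrow> cong N M)
   \<and> sum E {N. E N \<noteq> 0} = 1"

definition snd_p :: "'v dterm \<Rightarrow> real \<Rightarrow> 'v proc" where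
  "snd_p u p = PTau [(p, PSnd u [(1, PNil)]), (1 - p, PNil)]"

definition resnd_p :: "'v dterm \<Rightarrow> real \<Rightarrow> 'v proc" where
  "resnd_p u p = PSig [(1, snd_p u p)]"

text \<open>fwd_p = ?(x).resnd<x>_p = fix X. (floor ?(x).resnd<x>_p floor) X, with x = X = 0.\<close>
definition fwd_p :: "real \<Rightarrow> 'v proc" where
  "fwd_p p = PFix 0 (PRcv 0 [(1, resnd_p (DVar 0) p)] [(1, PVar 0)])"

definition bang :: "'v \<Rightarrow> 'v proc" where
  "bang v = PSnd (DVal v) [(1, PNil)]"

definition prodnet :: "nat set \<Rightarrow> (nat \<Rightarrow> ('n, 'v) net) \<Rightarrow> ('n, 'v) net" where
  "prodnet I f = foldr (\<lambda>i acc. Par (f i) acc) (sorted_list_of_set I) Zero"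

end

theory Submission
  imports Defs "HOL-Library.Multiset"
begin

primrec hc :: "'v proc \<Rightarrow> nat" where
  "hc PNil = 0" | "hc (PSnd u C) = 1" | "hc (PRcv x C D) = 2" | "hc (PTau C) = 3"
| "hc (PSig C) = 4" | "hc (PVar X) = 5" | "hc (PFix X P) = hc P"

lemma hc_psub1: "hc Q \<noteq> 5 \<Longrightarrow> hc (psub R X Q) = hc Q"
  by (induction Q) auto

lemma hc_psub2: "hc Q = 5 \<Longrightarrow> hc (psub R X Q) = 5 \<or> hc (psub R X Q) = hc R"
  by (induction Q) auto

lemma hc_unfold: "hc (unfold X P) = hc P"
  unfolding unfold_def using hc_psub1[of P] hc_psub2[of P "PFix X P" X] by (cases "hc P = 5") auto

definition hcn :: "('n,'v) net \<Rightarrow> ('n \<times> nat \<times> 'n set) set" where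
  "hcn M = (\<lambda>(k,P,\<mu>). (k, hc P, \<mu>)) ` nodes M"

lemma cong_inv: "cong M M' \<Longrightarrow> hcn M = hcn M' \<and> mset (nlist M) = mset (nlist M') \<and> has_bot M = has_bot M'"
  by (induction rule: cong.induct) (auto simp: hcn_def hc_unfold image_Un)

lemma norcv: "hc P \<noteq> 2 \<Longrightarrow> \<not> rcv k \<mu> P"
proof
  assume "hc P \<noteq> 2" "rcv k \<mu> P"
  then obtain x C D where "cong (Node k P \<mu>) (Node k (PRcv x C D) \<mu>)" by (auto simp: rcv_def)
  from cong_inv[OF this] have "hcn (Node k P \<mu>) = hcn (Node k (PRcv x C D) \<mu>)" by simp
  then show False using \<open>hc P \<noteq> 2\<close> by (simp add: hcn_def)
qed

primrec upd :: "('n,'v) net \<Rightarrow> ('n \<Rightarrow> 'v proc option) \<Rightarrow> ('n,'v) net" where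
  "upd Zero F = Zero" | "upd (Par A B) F = Par (upd A F) (upd B F)"
| "upd (Node k P \<mu>) F = Node k (case F k of None \<Rightarrow> P | Some Q \<Rightarrow> Q) \<mu>" | "upd Bot F = Bot"

lemma upd_nlist[simp]: "nlist (upd K F) = nlist K" by (induction K) auto
lemma upd_has_bot[simp]: "has_bot (upd K F) = has_bot K" by (induction K) auto
lemma upd_nds[simp]: "nds (upd K F) = nds K" by (simp add: nds_def)
lemma upd_nodes: "nodes (upd K F) = (\<lambda>(k,P,\<mu>). (k, case F k of None \<Rightarrow> P | Some Q \<Rightarrow> Q, \<mu>)) ` nodes K"
  by (induction K) (auto simp: image_Un)
lemma upd_upd: "upd (upd K F) G = upd K (\<lambda>k. case G k of None \<Rightarrow> F k | Some Q \<Rightarrow> Some Q)"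
  by (induction K) (auto split: option.splits)
lemma upd_id: "\<forall>k\<in>nds K. F k = None \<Longrightarrow> upd K F = K"
  by (induction K) (auto simp: nds_def)
lemma nodes_nds: "(k,P,\<mu>) \<in> nodes K \<Longrightarrow> k \<in> nds K"
  by (induction K) (auto simp: nds_def)

lemma dirac_par: "dpar (dirac A) (dirac B) = dirac (Par A B)"
  by (auto simp: dpar_def dirac_def fun_eq_iff split: net.splits)

lemma rcv_inert:
  assumes "\<forall>(k,Q,\<mu>)\<in>nodes K. k \<noteq> m \<and> \<not>(m\<in>\<mu> \<and> rcv k \<mu> Q)" "\<not> has_bot K"
  shows "trans K (In m v) (dirac K)"
  using assms
proof (induction K)
  case Zero then show ?case by (simp add: trans.RcvZero)
next
  case (Par A B) then show ?case using trans.RcvPar[of A m v "dirac A" B "dirac B"] by (simp add: dirac_par)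
next
  case (Node k P \<mu>) then show ?case by (intro trans.RcvEnb) auto
next
  case Bot then show ?case by simp
qed

lemma nds_Par[simp]: "nds (Par A B) = nds A \<union> nds B" by (simp add: nds_def)
lemma nds_Node[simp]: "nds (Node k P \<mu>) = {k}" by (simp add: nds_def)

lemma bcast:
  assumes "(m, bang v, \<nu>) \<in> nodes K" "distinct (nlist K)" "\<not> has_bot K"
    "\<forall>(k,Q,\<mu>)\<in>nodes K. k \<noteq> m \<longrightarrow> \<not>(m\<in>\<mu> \<and> rcv k \<mu> Q)"
  shows "trans K (Out m v (\<nu> - (nds K - {m}))) (dirac (upd K (\<lambda>k. if k = m then Some PNil else None)))"
  using assms
proof (induction K)
  case Zero then show ?case by simp
next
  case (Par A B)
  have dis: "set (nlist A) \<inter> set (nlist B) = {}" "distinct (nlist A)" "distinct (nlist B)"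
    using Par.prems(2) by auto
  show ?case
  proof (cases "(m, bang v, \<nu>) \<in> nodes A")
    case True
    then have mA: "m \<in> nds A" by (rule nodes_nds)
    then have mB: "m \<notin> nds B" using dis by (auto simp: nds_def)
    have tA: "trans A (Out m v (\<nu> - (nds A - {m}))) (dirac (upd A (\<lambda>k. if k = m then Some PNil else None)))"
      by (rule Par.IH(1)) (use Par.prems True dis in auto)
    have tB: "trans B (In m v) (dirac B)"
      apply (rule rcv_inert) using Par.prems mB nodes_nds by fastforce+
    have uB: "upd B (\<lambda>k. if k = m then Some PNil else None) = B" using mB by (intro upd_id) auto
    have "\<nu> - (nds A - {m}) - nds B = \<nu> - (nds (Par A B) - {m})" using mB by auto
    then show ?thesis using trans.BcastL[OF tA tB] uB by (simp add: dirac_par)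
  next
    case False
    then have T: "(m, bang v, \<nu>) \<in> nodes B" using Par.prems by auto
    then have mA: "m \<in> nds B" by (rule nodes_nds)
    then have mB: "m \<notin> nds A" using dis by (auto simp: nds_def)
    have tA: "trans B (Out m v (\<nu> - (nds B - {m}))) (dirac (upd B (\<lambda>k. if k = m then Some PNil else None)))"
      by (rule Par.IH(2)) (use Par.prems T dis in auto)
    have tB: "trans A (In m v) (dirac A)"
      apply (rule rcv_inert) using Par.prems mB nodes_nds by fastforce+
    have uB: "upd A (\<lambda>k. if k = m then Some PNil else None) = A" using mB by (intro upd_id) auto
    have "\<nu> - (nds B - {m}) - nds A = \<nu> - (nds (Par A B) - {m})" using mB by auto
    then show ?thesis using trans.BcastR[OF tA tB] uB by (simp add: dirac_par)
  qed
next
  case (Node k P \<mu>)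
  then have "k = m" "P = bang v" "\<mu> = \<nu>" by auto
  moreover have L: "(lift m [(1, PNil)] \<nu> :: ('a,'b) dist) = dirac (Node m PNil \<nu>)"
    by (auto simp: lift_def dirac_def fun_eq_iff)
  moreover have T: "trans (Node m (bang v) \<nu>) (Out m v \<nu>) (lift m [(1, PNil)] \<nu>)"
    unfolding bang_def by (rule trans.Snd)
  ultimately show ?case by simp
next
  case Bot then show ?case by simp
qed

lemma dpar_mixL: "dpar (\<lambda>N. sum_list (map (\<lambda>(p,P). if N = f P then p else 0) C)) (dirac B)
   = (\<lambda>N. sum_list (map (\<lambda>(p,P). if N = Par (f P) B then p else 0) C))"
  by (induction C) (auto simp: dpar_def dirac_def fun_eq_iff algebra_simps split: net.splits)

lemma dpar_mixR: "dpar (dirac B) (\<lambda>N. sum_list (map (\<lambda>(p,P). if N = f P then p else 0) C))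
   = (\<lambda>N. sum_list (map (\<lambda>(p,P). if N = Par B (f P) then p else 0) C))"
  by (induction C) (auto simp: dpar_def dirac_def fun_eq_iff algebra_simps split: net.splits)

lemma nobot: "\<not> has_bot B \<Longrightarrow> \<not> (\<exists>N'. cong B (Par Bot N'))"
  using cong_inv by fastforce

lemma tau_step:
  assumes "(m, PTau C, \<nu>) \<in> nodes K" "distinct (nlist K)" "\<not> has_bot K"
  shows "trans K Tau (\<lambda>N. sum_list (map (\<lambda>(p,P). if N = upd K (\<lambda>k. if k = m then Some P else None) then p else 0) C))"
  using assms
proof (induction K)
  case Zero then show ?case by simp
next
  case (Par A B)
  have dis: "set (nlist A) \<inter> set (nlist B) = {}" "distinct (nlist A)" "distinct (nlist B)"
    using Par.prems(2) by auto
  show ?case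
  proof (cases "(m, PTau C, \<nu>) \<in> nodes A")
    case True
    then have mA: "m \<in> nds A" by (rule nodes_nds)
    then have mB: "m \<notin> nds B" using dis by (auto simp: nds_def)
    have uB: "\<And>P. upd B (\<lambda>k. if k = m then Some P else None) = B" using mB by (intro upd_id) auto
    have tA: "trans A Tau (\<lambda>N. sum_list (map (\<lambda>(p,P). if N = upd A (\<lambda>k. if k = m then Some P else None) then p else 0) C))"
      by (rule Par.IH(1)) (use Par.prems True dis in auto)
    from trans.TauParL[OF tA nobot[of B]] Par.prems show ?thesis
      by (simp add: dpar_mixL uB)
  next
    case False
    then have T: "(m, PTau C, \<nu>) \<in> nodes B" using Par.prems by auto
    then have mA: "m \<in> nds B" by (rule nodes_nds)
    then have mB: "m \<notin> nds A" using dis by (auto simp: nds_def)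
    have uB: "\<And>P. upd A (\<lambda>k. if k = m then Some P else None) = A" using mB by (intro upd_id) auto
    have tA: "trans B Tau (\<lambda>N. sum_list (map (\<lambda>(p,P). if N = upd B (\<lambda>k. if k = m then Some P else None) then p else 0) C))"
      by (rule Par.IH(2)) (use Par.prems T dis in auto)
    from trans.TauParR[OF tA nobot[of A]] Par.prems show ?thesis
      by (simp add: dpar_mixR uB)
  qed
next
  case (Node k P \<mu>)
  then have "k = m" "P = PTau C" "\<mu> = \<nu>" by auto
  moreover have "lift m C \<nu> = (\<lambda>N. sum_list (map (\<lambda>(p,P). if N = Node m P \<nu> then p else 0) C))"
    by (simp add: lift_def)
  ultimately show ?case using trans.TauNode[of m C \<nu>] by simp
next
  case Bot then show ?case by simp
qed


definition flat :: "('n,'v) net list \<Rightarrow> ('n,'v) net" where "flat xs = foldr Par xs Zero"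

lemma foldr_map_par: "foldr (\<lambda>i acc. Par (f i) acc) xs Zero = foldr Par (map f xs) Zero"
  by (induction xs) auto

lemma prodnet_flat: "prodnet A f = flat (map f (sorted_list_of_set A))"
  unfolding prodnet_def flat_def by (rule foldr_map_par)

lemma flat_nlist[simp]: "nlist (flat xs) = concat (map nlist xs)"
  by (induction xs) (auto simp: flat_def)
lemma flat_nodes[simp]: "nodes (flat xs) = \<Union> (nodes ` set xs)"
  by (induction xs) (auto simp: flat_def)
lemma flat_has_bot[simp]: "has_bot (flat xs) = (\<exists>x\<in>set xs. has_bot x)"
  by (induction xs) (auto simp: flat_def)
lemma flat_upd[simp]: "upd (flat xs) F = flat (map (\<lambda>x. upd x F) xs)"
  by (induction xs) (auto simp: flat_def)

lemma cong_flat_append: "cong (flat (xs @ ys)) (Par (flat xs) (flat ys))"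
proof (induction xs)
  case Nil
  show ?case unfolding flat_def apply simp
    by (meson cong_comm cong_sym cong_trans cong_unit)
next
  case (Cons x xs)
  have "cong (Par x (flat (xs @ ys))) (Par x (Par (flat xs) (flat ys)))"
    using Cons by (rule cong_parR)
  moreover have "cong (Par x (Par (flat xs) (flat ys))) (Par (Par x (flat xs)) (flat ys))"
    by (rule cong_sym, rule cong_assoc)
  ultimately show ?case unfolding flat_def by (simp add: cong_trans)
qed

lemma cong_swap3: "cong (Par A (Par x B)) (Par x (Par A B))"
proof -
  have "cong (Par A (Par x B)) (Par (Par A x) B)" by (rule cong_sym, rule cong_assoc)
  moreover have "cong (Par (Par A x) B) (Par (Par x A) B)" by (rule cong_parL, rule cong_comm)
  moreover have "cong (Par (Par x A) B) (Par x (Par A B))" by (rule cong_assoc)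
  ultimately show ?thesis by (meson cong_trans)
qed

lemma cong_flat_perm: "mset xs = mset ys \<Longrightarrow> cong (flat xs) (flat ys)"
proof (induction xs arbitrary: ys)
  case Nil then show ?case by (simp add: cong_refl)
next
  case (Cons x xs)
  then have "x \<in> set ys" by (metis list.set_intros(1) set_mset_mset)
  then obtain ys1 ys2 where ys: "ys = ys1 @ x # ys2" by (meson split_list)
  then have "mset xs = mset (ys1 @ ys2)" using Cons.prems by simp
  then have c1: "cong (flat xs) (flat (ys1 @ ys2))" by (rule Cons.IH)
  have "cong (flat ys) (Par (flat ys1) (flat (x # ys2)))" unfolding ys by (rule cong_flat_append)
  moreover have "flat (x # ys2) = Par x (flat ys2)" by (simp add: flat_def)
  moreover have "cong (Par (flat ys1) (Par x (flat ys2))) (Par x (Par (flat ys1) (flat ys2)))"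
    by (rule cong_swap3)
  moreover have "cong (Par x (Par (flat ys1) (flat ys2))) (Par x (flat (ys1 @ ys2)))"
    by (rule cong_parR, rule cong_sym, rule cong_flat_append)
  moreover have "cong (Par x (flat (ys1 @ ys2))) (Par x (flat xs))"
    by (rule cong_parR, rule cong_sym, rule c1)
  ultimately have "cong (flat ys) (flat (x # xs))" by (simp add: flat_def) (meson cong_trans)
  then show ?case by (rule cong_sym)
qed

lemma mset_sls: "mset (sorted_list_of_set A) = mset_set A"
  by (metis mset_sorted_list_of_multiset sorted_list_of_mset_set)

lemma cong_prodnet_union:
  assumes "finite A" "finite B" "A \<inter> B = {}"
  shows "cong (Par (prodnet A g) (Par (prodnet B g) R)) (Par (prodnet (A \<union> B) g) R)"
proof -
  have "cong (Par (prodnet A g) (Par (prodnet B g) R)) (Par (Par (prodnet A g) (prodnet B g)) R)"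
    by (rule cong_sym, rule cong_assoc)
  moreover have "cong (Par (prodnet A g) (prodnet B g)) (prodnet (A \<union> B) g)"
  proof -
    have "cong (Par (prodnet A g) (prodnet B g)) (flat (map g (sorted_list_of_set A) @ map g (sorted_list_of_set B)))"
      unfolding prodnet_flat by (rule cong_sym, rule cong_flat_append)
    moreover have "cong (flat (map g (sorted_list_of_set A) @ map g (sorted_list_of_set B))) (prodnet (A \<union> B) g)"
      unfolding prodnet_flat using assms by (intro cong_flat_perm) (simp add: mset_sls mset_set_Union)
    ultimately show ?thesis by (rule cong_trans)
  qed
  ultimately show ?thesis by (meson cong_parL cong_trans)
qed

lemma concat_nl: "concat (map (nlist \<circ> (\<lambda>i. Node (m i) (P i) (\<mu> i))) xs) = map m xs"
  by (induction xs) auto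

lemma prodnet_nlist[simp]: "nlist (prodnet A (\<lambda>i. Node (m i) (P i) (\<mu> i))) = map m (sorted_list_of_set A)"
  unfolding prodnet_flat by (simp add: concat_nl)

lemma prodnet_nodes[simp]: "finite A \<Longrightarrow> nodes (prodnet A f) = \<Union> (nodes ` f ` A)"
  unfolding prodnet_flat by simp

lemma prodnet_has_bot[simp]: "finite A \<Longrightarrow> has_bot (prodnet A (\<lambda>i. Node (m i) (P i) (\<mu> i))) = False"
  unfolding prodnet_flat by simp

lemma prodnet_upd[simp]: "upd (prodnet A f) F = prodnet A (\<lambda>i. upd (f i) F)"
  unfolding prodnet_flat by (simp add: o_def)


lemma prodnet_cong: "finite A \<Longrightarrow> (\<And>i. i \<in> A \<Longrightarrow> f i = g i) \<Longrightarrow> prodnet A f = prodnet A g"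
  unfolding prodnet_flat by (metis (mono_tags, lifting) map_eq_conv set_sorted_list_of_set)

lemma dirac_step: "hat_tau A E \<Longrightarrow> dist_hat_tau (dirac A) E"
  unfolding dist_hat_tau_def
  by (rule exI[of _ "[(1, A, E)]"]) (auto simp: dirac_def fun_eq_iff)

theorem lemmaA4:
  fixes I J I1 I2 I3 :: "nat set"
    and v :: 'v
    and p q :: "nat \<Rightarrow> real"
    and m n :: "nat \<Rightarrow> 'n"
    and nu :: "'n \<Rightarrow> 'n set"
    and M N :: "('n, 'v) net"
  assumes "finite I" and "finite J" and "I \<inter> J = {}"
    and "\<forall>i\<in>I. 0 \<le> p i \<and> p i \<le> 1"
    and "\<forall>j\<in>J. 0 \<le> q j \<and> q j \<le> 1"
    and "well_formed M"
    and "\<not> has_bot N"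
    and "cong M (Par N (Par (prodnet I (\<lambda>i. Node (m i) (snd_p (DVal v) (p i)) (nu (m i))))
                          (prodnet J (\<lambda>j. Node (n j) (fwd_p (q j)) (nu (n j))))))"
    and "\<forall>i\<in>I. n ` J \<subseteq> nu (m i) \<and> nu (m i) \<subseteq> nds M"
    and "\<forall>i\<in>I. \<forall>(k, P, \<mu>) \<in> nodes N. k \<in> nu (m i) \<longrightarrow> \<not> rcv k \<mu> P"
    and "I1 \<union> I2 \<union> I3 = I" and "I1 \<inter> I2 = {}" and "I1 \<inter> I3 = {}" and "I2 \<inter> I3 = {}"
  shows "\<exists>E. weak_tau
            (Par N (Par (prodnet I1 (\<lambda>i. Node (m i) (bang v) (nu (m i))))
                   (Par (prodnet I2 (\<lambda>i. Node (m i) PNil (nu (m i))))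
                   (Par (prodnet I3 (\<lambda>i. Node (m i) (snd_p (DVal v) (p i)) (nu (m i))))
                        (prodnet J (\<lambda>j. Node (n j) (resnd_p (DVal v) (q j)) (nu (n j))))))))
            E
          \<and> dirac_cong E
            (Par N (Par (prodnet I (\<lambda>i. Node (m i) PNil (nu (m i))))
                        (prodnet J (\<lambda>j. Node (n j) (resnd_p (DVal v) (q j)) (nu (n j))))))"
proof -
  note wf = assms(6)[unfolded well_formed_def]
  define bn where "bn = (\<lambda>i. Node (m i) (bang v) (nu (m i)))"
  define nl where "nl = (\<lambda>i. Node (m i) (PNil :: 'v proc) (nu (m i)))"
  define sn where "sn = (\<lambda>i. Node (m i) (snd_p (DVal v) (p i)) (nu (m i)))"
  define rs where "rs = (\<lambda>j. Node (n j) (resnd_p (DVal v) (q j)) (nu (n j)))"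
  define fw where "fw = (\<lambda>j. Node (n j) (fwd_p (q j) :: 'v proc) (nu (n j)))"
  define K0 where "K0 = Par N (Par (prodnet I1 bn) (Par (prodnet I2 nl) (Par (prodnet I3 sn) (prodnet J rs))))"
  define R0 where "R0 = Par N (Par (prodnet I sn) (prodnet J fw))"
  define ON where "ON = Par N (Par (prodnet I nl) (prodnet J rs))"
  have fin: "finite I1" "finite I2" "finite I3" using assms(1) assms(11) by (auto intro: finite_subset)
  have cR: "cong M R0" using assms(8) unfolding R0_def sn_def fw_def .
  have inv: "hcn M = hcn R0" "mset (nlist M) = mset (nlist R0)" using cong_inv[OF cR] by auto
  have dR: "distinct (nlist R0)" using wf inv(2) mset_eq_imp_distinct_iff by blast
  have nlR: "nlist R0 = nlist N @ map m (sorted_list_of_set I) @ map n (sorted_list_of_set J)"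
    unfolding R0_def sn_def fw_def by simp
  have injm: "inj_on m I" and disjN: "m ` I \<inter> set (nlist N) = {}" and disjJ: "m ` I \<inter> n ` J = {}"
    and injn: "inj_on n J" and disjNJ: "n ` J \<inter> set (nlist N) = {}"
    using dR assms(1,2) unfolding nlR by (auto simp: distinct_map)
  have toM: "\<And>k P \<mu>. (k,P,\<mu>) \<in> nodes R0 \<Longrightarrow> \<exists>P'. (k,P',\<mu>) \<in> nodes M"
  proof -
    fix k P \<mu> assume "(k,P,\<mu>) \<in> nodes R0"
    then have "(k, hc P, \<mu>) \<in> hcn R0" unfolding hcn_def by force
    then have "(k, hc P, \<mu>) \<in> hcn M" using inv(1) by simp
    then show "\<exists>P'. (k,P',\<mu>) \<in> nodes M" unfolding hcn_def by auto
  qed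
  have mi_R: "\<And>i. i \<in> I \<Longrightarrow> (m i, snd_p (DVal v) (p i), nu (m i)) \<in> nodes R0"
    unfolding R0_def sn_def using assms(1) by auto
  have N_R: "\<And>k P \<mu>. (k,P,\<mu>) \<in> nodes N \<Longrightarrow> (k,P,\<mu>) \<in> nodes R0"
    unfolding R0_def by auto
  have irr: "\<And>i. i \<in> I \<Longrightarrow> m i \<notin> nu (m i)"
    using mi_R toM wf by fast
  have symN: "\<And>i k P \<mu>. i \<in> I \<Longrightarrow> (k,P,\<mu>) \<in> nodes N \<Longrightarrow> k \<in> nu (m i) \<longleftrightarrow> m i \<in> \<mu>"
  proof -
    fix i k P \<mu> assume a: "i \<in> I" "(k,P,\<mu>) \<in> nodes N"
    obtain P1 where 1: "(m i, P1, nu (m i)) \<in> nodes M" using toM mi_R a by blast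
    obtain P2 where 2: "(k, P2, \<mu>) \<in> nodes M" using toM N_R a by blast
    show "k \<in> nu (m i) \<longleftrightarrow> m i \<in> \<mu>" using wf 1 2 by fast
  qed
  have msK: "mset (nlist K0) = mset (nlist R0)"
  proof -
    have "mset (sorted_list_of_set I) = mset (sorted_list_of_set I1) + mset (sorted_list_of_set I2) + mset (sorted_list_of_set I3)"
      using fin assms(11-14) by (simp add: mset_sls mset_set_Union[symmetric] Int_Un_distrib2)
    then have "image_mset m (mset (sorted_list_of_set I)) = image_mset m (mset (sorted_list_of_set I1)) + image_mset m (mset (sorted_list_of_set I2)) + image_mset m (mset (sorted_list_of_set I3))"
      by simp
    then show ?thesis unfolding K0_def R0_def bn_def nl_def sn_def rs_def fw_def by simp
  qed
  have dK: "distinct (nlist K0)" using dR msK mset_eq_imp_distinct_iff by blast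
  have ndsK: "nds K0 = nds M" unfolding nds_def using msK inv(2) by (metis set_mset_mset)
  have hbK: "\<not> has_bot K0" unfolding K0_def bn_def nl_def sn_def rs_def using fin assms(2,7) by simp
  have ndsN: "nds N = set (nlist N)" by (simp add: nds_def)
  have nodesK: "nodes K0 = nodes N \<union> (\<lambda>i. (m i, bang v, nu (m i))) ` I1 \<union> (\<lambda>i. (m i, PNil, nu (m i))) ` I2
      \<union> (\<lambda>i. (m i, snd_p (DVal v) (p i), nu (m i))) ` I3 \<union> (\<lambda>j. (n j, resnd_p (DVal v) (q j), nu (n j))) ` J"
    unfolding K0_def bn_def nl_def sn_def rs_def using fin assms(2) by auto
  have inert: "\<And>H i. (\<forall>k. H k = None \<or> H k = Some PNil \<or> H k = Some (bang v)) \<Longrightarrow> (\<forall>k\<in>nds N. H k = None)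
      \<Longrightarrow> i \<in> I \<Longrightarrow> \<forall>(k,Q,\<mu>)\<in>nodes (upd K0 H). k \<noteq> m i \<longrightarrow> \<not>(m i \<in> \<mu> \<and> rcv k \<mu> Q)"
  proof (intro ballI, clarify)
    fix H i k Q \<mu>
    assume H: "\<forall>k. H k = None \<or> H k = Some PNil \<or> H k = Some (bang v)" "\<forall>k\<in>nds N. H k = None"
      and i: "i \<in> I" and kQ: "(k, Q, \<mu>) \<in> nodes (upd K0 H)" and ne: "k \<noteq> m i"
      and mu: "m i \<in> \<mu>" and r: "rcv k \<mu> Q"
    obtain Q0 where Q0: "(k, Q0, \<mu>) \<in> nodes K0" and QQ: "Q = (case H k of None \<Rightarrow> Q0 | Some Q' \<Rightarrow> Q')"
      using kQ unfolding upd_nodes by auto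
    show False
    proof (cases "(k, Q0, \<mu>) \<in> nodes N")
      case True
      then have "H k = None" using H(2) nodes_nds by fast
      then have "Q = Q0" using QQ by simp
      show False
      proof (cases "k \<in> nu (m i)")
        case True
        then show False using assms(10) i \<open>(k, Q0, \<mu>) \<in> nodes N\<close> \<open>Q = Q0\<close> r by fast
      next
        case False
        then show False using symN[OF i \<open>(k, Q0, \<mu>) \<in> nodes N\<close>] mu by simp
      qed
    next
      case False
      then have "hc Q0 \<noteq> 2" using Q0 unfolding nodesK by (auto simp: bang_def snd_p_def resnd_p_def)
      moreover have "hc Q \<noteq> 2"
      proof -
        have "H k = None \<or> H k = Some PNil \<or> H k = Some (bang v)" using H(1) by (rule spec)
        then show ?thesis
        proof (elim disjE)
          assume "H k = None" then have "Q = Q0" unfolding QQ by (simp only: \<open>H k = None\<close> option.case)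
          then show ?thesis using \<open>hc Q0 \<noteq> 2\<close> by simp
        next
          assume "H k = Some PNil" then have "Q = PNil" unfolding QQ by (simp only: \<open>H k = Some PNil\<close> option.case)
          then show ?thesis by simp
        next
          assume "H k = Some (bang v)" then have "Q = bang v" unfolding QQ by (simp only: \<open>H k = Some (bang v)\<close> option.case)
          then show ?thesis by (simp add: bang_def)
        qed
      qed
      ultimately show False using norcv[of Q k \<mu>] r by simp
    qed
  qed
  have bc: "\<And>H i. (\<forall>k. H k = None \<or> H k = Some PNil \<or> H k = Some (bang v)) \<Longrightarrow> (\<forall>k\<in>nds N. H k = None)
      \<Longrightarrow> i \<in> I \<Longrightarrow> (m i, bang v, nu (m i)) \<in> nodes (upd K0 H)
      \<Longrightarrow> hat_tau (upd K0 H) (dirac (upd K0 (\<lambda>k. if k = m i then Some PNil else H k)))"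
  proof -
    fix H i
    assume H: "\<forall>k. H k = None \<or> H k = Some PNil \<or> H k = Some (bang v)" "\<forall>k\<in>nds N. H k = None"
      and i: "i \<in> I" and nd: "(m i, bang v, nu (m i)) \<in> nodes (upd K0 H)"
    have t: "trans (upd K0 H) (Out (m i) v (nu (m i) - (nds (upd K0 H) - {m i})))
       (dirac (upd (upd K0 H) (\<lambda>k. if k = m i then Some PNil else None)))"
      apply (rule bcast[OF nd])
      using dK hbK inert[OF H i] by simp_all
    have "nu (m i) \<subseteq> nds K0" using assms(9) i ndsK by simp
    then have e1: "nu (m i) - (nds (upd K0 H) - {m i}) = {}" using irr[OF i] by auto
    have e2: "upd (upd K0 H) (\<lambda>k. if k = m i then Some PNil else None) = upd K0 (\<lambda>k. if k = m i then Some PNil else H k)"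
      unfolding upd_upd by (rule arg_cong[where f="upd K0"]) auto
    have "trans (upd K0 H) Tau (dirac (upd K0 (\<lambda>k. if k = m i then Some PNil else H k)))"
      using trans.ShhSnd[OF t[unfolded e1 e2]] .
    then show "hat_tau (upd K0 H) (dirac (upd K0 (\<lambda>k. if k = m i then Some PNil else H k)))"
      unfolding hat_tau_def by simp
  qed
  define G where "G = (\<lambda>S k. if k \<in> m ` S then Some (PNil :: 'v proc) else None)"
  have Gok: "\<And>S. S \<subseteq> I \<Longrightarrow> (\<forall>k. G S k = None \<or> G S k = Some PNil \<or> G S k = Some (bang v)) \<and> (\<forall>k\<in>nds N. G S k = None)"
    using disjN ndsN unfolding G_def by auto
  have steps: "\<And>S. finite S \<Longrightarrow> S \<subseteq> I1 \<union> I3 \<Longrightarrow> dist_hat_tau\<^sup>*\<^sup>* (dirac K0) (dirac (upd K0 (G S)))"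
  proof -
    fix S :: "nat set"
    show "finite S \<Longrightarrow> S \<subseteq> I1 \<union> I3 \<Longrightarrow> dist_hat_tau\<^sup>*\<^sup>* (dirac K0) (dirac (upd K0 (G S)))"
    proof (induction S rule: finite_induct)
      case empty
      have "upd K0 (G {}) = K0" by (rule upd_id) (simp add: G_def)
      then show ?case by simp
    next
      case (insert i S)
      have SI: "S \<subseteq> I" and iI: "i \<in> I" using insert.prems assms(11) by auto
      have mS: "m i \<notin> m ` S" using injm SI iI insert.hyps(2) by (auto simp: inj_on_def)
      have Gi: "G (insert i S) = (\<lambda>k. if k = m i then Some PNil else G S k)"
        unfolding G_def by auto
      define KS where "KS = upd K0 (G S)"
      have IH: "dist_hat_tau\<^sup>*\<^sup>* (dirac K0) (dirac KS)" using insert KS_def by auto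
      have GS: "\<forall>k. G S k = None \<or> G S k = Some PNil \<or> G S k = Some (bang v)" "\<forall>k\<in>nds N. G S k = None"
        using Gok[OF SI] by auto
      have GSi: "G S (m i) = None" using mS unfolding G_def by auto
      have last: "dist_hat_tau\<^sup>*\<^sup>* (dirac KS) (dirac (upd K0 (G (insert i S))))"
      proof (cases "i \<in> I1")
        case True
        have "(m i, bang v, nu (m i)) \<in> nodes K0" using True unfolding nodesK by auto
        then have "(m i, bang v, nu (m i)) \<in> nodes KS" unfolding KS_def upd_nodes using GSi by force
        then have "hat_tau KS (dirac (upd K0 (G (insert i S))))"
          unfolding Gi KS_def by (rule bc[OF GS iI])
        then show ?thesis by (intro r_into_rtranclp dirac_step)
      next
        case False
        then have i3: "i \<in> I3" using insert.prems by auto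
        have "(m i, snd_p (DVal v) (p i), nu (m i)) \<in> nodes K0" using i3 unfolding nodesK by auto
        then have nd: "(m i, PTau [(p i, bang v), (1 - p i, PNil)], nu (m i)) \<in> nodes KS"
          unfolding KS_def upd_nodes using GSi by (force simp: snd_p_def bang_def)
        define Kb where "Kb = upd KS (\<lambda>k. if k = m i then Some (bang v) else None)"
        define Kn where "Kn = upd KS (\<lambda>k. if k = m i then Some PNil else None)"
        have Kn: "Kn = upd K0 (G (insert i S))" unfolding Kn_def KS_def upd_upd Gi
          by (rule arg_cong[where f="upd K0"]) auto
        have Kb: "Kb = upd K0 (\<lambda>k. if k = m i then Some (bang v) else G S k)" unfolding Kb_def KS_def upd_upd
          by (rule arg_cong[where f="upd K0"]) auto
        have Hb: "\<forall>k. (\<lambda>k. if k = m i then Some (bang v) else G S k) k = None \<or> (\<lambda>k. if k = m i then Some (bang v) else G S k) k = Some PNil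
            \<or> (\<lambda>k. if k = m i then Some (bang v) else G S k) k = Some (bang v)"
          "\<forall>k\<in>nds N. (\<lambda>k. if k = m i then Some (bang v) else G S k) k = None"
          using GS disjN ndsN iI by auto
        have ndb: "(m i, bang v, nu (m i)) \<in> nodes Kb"
          using \<open>(m i, snd_p (DVal v) (p i), nu (m i)) \<in> nodes K0\<close> unfolding Kb upd_nodes by force
        have hb: "hat_tau Kb (dirac Kn)"
        proof -
          have "hat_tau Kb (dirac (upd K0 (\<lambda>k. if k = m i then Some PNil else (if k = m i then Some (bang v) else G S k))))"
            using bc[OF Hb iI] ndb unfolding Kb by simp
          moreover have "(\<lambda>k. if k = m i then Some PNil else (if k = m i then Some (bang v) else G S k)) = G (insert i S)"
            unfolding Gi by auto
          ultimately show ?thesis using Kn by simp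
        qed
        define D where "D = (\<lambda>N. sum_list (map (\<lambda>(pp,P). if N = upd KS (\<lambda>k. if k = m i then Some P else None) then pp else 0)
                 [(p i, bang v), (1 - p i, PNil)]))"
        have t: "trans KS Tau D" unfolding D_def
          by (rule tau_step[OF nd]) (simp_all add: KS_def dK hbK)
        have s1: "dist_hat_tau (dirac KS) D" using t by (simp add: dirac_step hat_tau_def)
        have pi: "0 \<le> p i" "p i \<le> 1" using assms(4) iI by auto
        have s2: "dist_hat_tau D (dirac Kn)"
          unfolding dist_hat_tau_def
        proof (rule exI[of _ "[(p i, Kb, dirac Kn), (1 - p i, Kn, dirac Kn)]"], intro conjI)
          show "D = (\<lambda>N. \<Sum>(pp, M, _)\<leftarrow>[(p i, Kb, dirac Kn), (1 - p i, Kn, dirac Kn)]. if M = N then pp else 0)"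
            unfolding D_def Kb_def Kn_def by (auto simp: fun_eq_iff)
          show "\<forall>(pp, M, F)\<in>set [(p i, Kb, dirac Kn), (1 - p i, Kn, dirac Kn)]. 0 \<le> pp \<and> hat_tau M F"
            using pi hb by (auto simp: hat_tau_def)
          show "dirac Kn = (\<lambda>N. \<Sum>(pp, _, F)\<leftarrow>[(p i, Kb, dirac Kn), (1 - p i, Kn, dirac Kn)]. pp * F N)"
            by (auto simp: fun_eq_iff algebra_simps)
        qed
        show ?thesis using s1 s2 Kn by (metis r_into_rtranclp rtranclp.rtrancl_into_rtrancl)
      qed
      show ?case using IH last KS_def by (metis rtranclp_trans)
    qed
  qed
  define KF where "KF = upd K0 (G (I1 \<union> I3))"
  have finS: "finite (I1 \<union> I3)" using fin by simp
  have wt: "weak_tau K0 (dirac KF)" unfolding weak_tau_def KF_def using steps[OF finS] by simp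
  have uN: "upd N (G (I1 \<union> I3)) = N" by (rule upd_id) (use Gok[of "I1 \<union> I3"] assms(11) in auto)
  have u1: "prodnet I1 (\<lambda>i. upd (bn i) (G (I1 \<union> I3))) = prodnet I1 nl"
    by (rule prodnet_cong[OF fin(1)]) (auto simp: bn_def nl_def G_def)
  have u2: "prodnet I2 (\<lambda>i. upd (nl i) (G (I1 \<union> I3))) = prodnet I2 nl"
    by (rule prodnet_cong[OF fin(2)]) (auto simp: nl_def G_def)
  have u3: "prodnet I3 (\<lambda>i. upd (sn i) (G (I1 \<union> I3))) = prodnet I3 nl"
    by (rule prodnet_cong[OF fin(3)]) (auto simp: sn_def nl_def G_def)
  have uJ: "prodnet J (\<lambda>j. upd (rs j) (G (I1 \<union> I3))) = prodnet J rs"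
  proof (rule prodnet_cong[OF assms(2)])
    fix j assume "j \<in> J"
    then have "n j \<notin> m ` (I1 \<union> I3)" using disjJ assms(11) by auto
    then show "upd (rs j) (G (I1 \<union> I3)) = rs j" by (simp add: rs_def G_def)
  qed
  have KFe: "KF = Par N (Par (prodnet I1 nl) (Par (prodnet I2 nl) (Par (prodnet I3 nl) (prodnet J rs))))"
    unfolding KF_def K0_def using uN u1 u2 u3 uJ by simp
  have cKF: "cong KF ON"
  proof -
    have "cong (Par (prodnet I2 nl) (Par (prodnet I3 nl) (prodnet J rs))) (Par (prodnet (I2 \<union> I3) nl) (prodnet J rs))"
      using fin(2,3) assms(14) by (rule cong_prodnet_union)
    then have "cong (Par (prodnet I1 nl) (Par (prodnet I2 nl) (Par (prodnet I3 nl) (prodnet J rs))))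
        (Par (prodnet I1 nl) (Par (prodnet (I2 \<union> I3) nl) (prodnet J rs)))" by (rule cong_parR)
    moreover have c2: "cong (Par (prodnet I1 nl) (Par (prodnet (I2 \<union> I3) nl) (prodnet J rs))) (Par (prodnet (I1 \<union> (I2 \<union> I3)) nl) (prodnet J rs))"
      using fin assms(12,13) by (intro cong_prodnet_union) auto
    ultimately have c3: "cong (Par (prodnet I1 nl) (Par (prodnet I2 nl) (Par (prodnet I3 nl) (prodnet J rs))))
        (Par (prodnet (I1 \<union> (I2 \<union> I3)) nl) (prodnet J rs))" by (rule cong_trans)
    have "I1 \<union> (I2 \<union> I3) = I" using assms(11) by auto
    then have "cong (Par (prodnet I1 nl) (Par (prodnet I2 nl) (Par (prodnet I3 nl) (prodnet J rs))))
        (Par (prodnet I nl) (prodnet J rs))" using c3 by simp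
    then show ?thesis unfolding KFe ON_def by (rule cong_parR)
  qed
  have dc: "dirac_cong (dirac KF) ON"
  proof -
    have "{Na. dirac KF Na \<noteq> 0} = {KF}" by (auto simp: dirac_def)
    then show ?thesis unfolding dirac_cong_def using cKF by (auto simp: dirac_def)
  qed
  note wt' = wt[unfolded K0_def bn_def nl_def sn_def rs_def] and dc' = dc[unfolded ON_def nl_def rs_def]
  show ?thesis
    apply (rule exI[of _ "dirac KF"])
    apply (rule conjI)
     apply (rule wt')
    apply (rule dc')
    done
qed

end
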